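(* Let $P$ be a poset, $\mathcal F$ a standard collection of upsets of $P$ and $\mathcal I$ a standard collection of downsets of $P$, and let $e:P\to C$ be a canonical extension of $P$ with respect to $(\mathcal F,\mathcal I)$. Regard $\mathcal I$ as a poset ordered by inclusion and $\mathcal F$ as a poset ordered by reverse inclusion. Define $e_{\mathcal I}:P\to\mathcal I$ by $e_{\mathcal I}(p)=p^\downarrow$, $e_{\mathcal F}:P\to\mathcal F$ by $e_{\mathcal F}(p)=p^\uparrow$, $\pi_{\mathcal I}:\mathcal I\to C$ by $\pi_{\mathcal I}(I)=\bigvee e[I]$ and $\pi_{\mathcal F}:\mathcal F\to C$ by $\pi_{\mathcal F}(F)=\bigwedge e[F]$. Then: (1) $\pi_{\mathcal F}$ and $\pi_{\mathcal I}$ are order-embeddings. (2) If $S\subseteq P$ and $\bigwedge e_{\mathcal F}[S]$ exists in $\mathcal F$, then $\bigwedge\pi_{\mathcal F}\circ e_{\mathcal F}[S]=\pi_{\mathcal F}(\bigwedge e_{\mathcal F}[S])$ in $C$. Similarly, if $T\subseteq P$ and $\bigvee e_{\mathcal I}[T]$ exists in $\mathcal I$, then $\bigvee\pi_{\mathcal I}\circ e_{\mathcal I}[T]=\pi_{\mathcal I}(\bigvee e_{\mathcal I}[T])$ in $C$.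
   Context: For $p\in P$, $p^\uparrow=\{q\in P:q\ge p\}$ and $p^\downarrow=\{q\in P:q\le p\}$. A collection of upsets of $P$ is standard if it contains every principal upset $p^\uparrow$; a collection of downsets is standard if it contains every $p^\downarrow$. A completion of $P$ is an order-embedding $e:P\to C$ into a complete lattice. A canonical extension of $P$ with respect to $(\mathcal F,\mathcal I)$ is a completion $e:P\to C$ such that (i) ($(\mathcal F,\mathcal I)$-dense) every $z\in C$ satisfies $z=\bigvee\{\bigwedge e[F]:F\in\mathcal F,\ \bigwedge e[F]\le z\}=\bigwedge\{\bigvee e[I]:I\in\mathcal I,\ \bigvee e[I]\ge z\}$, and (ii) ($(\mathcal F,\mathcal I)$-compact) whenever $F\in\mathcal F$, $I\in\mathcal I$ and $\bigwedge e[F]\le\bigvee e[I]$, then $F\cap I\ne\emptyset$. *)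

theory Defs
  imports Main
begin

text \<open>The poset P is the carrier of a type of class order (P = UNIV);
  the complete lattice C is a type of class complete_lattice.\<close>

definition up :: "'a::order \<Rightarrow> 'a set" where
  "up p = {q. q \<ge> p}"

definition down :: "'a::order \<Rightarrow> 'a set" where
  "down p = {q. q \<le> p}"

definition upset :: "'a::order set \<Rightarrow> bool" where
  "upset U \<longleftrightarrow> (\<forall>x y. x \<in> U \<longrightarrow> x \<le> y \<longrightarrow> y \<in> U)"

definition downset :: "'a::order set \<Rightarrow> bool" where
  "downset D \<longleftrightarrow> (\<forall>x y. x \<in> D \<longrightarrow> y \<le> x \<longrightarrow> y \<in> D)"

definition standard_upsets :: "'a::order set set \<Rightarrow> bool" where
  "standard_upsets \<F> \<longleftrightarrow> (\<forall>F\<in>\<F>. upset F) \<and> (\<forall>p. up p \<in> \<F>)"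

definition standard_downsets :: "'a::order set set \<Rightarrow> bool" where
  "standard_downsets \<I> \<longleftrightarrow> (\<forall>I\<in>\<I>. downset I) \<and> (\<forall>p. down p \<in> \<I>)"

definition order_embedding :: "('a::order \<Rightarrow> 'b::order) \<Rightarrow> bool" where
  "order_embedding f \<longleftrightarrow> (\<forall>x y. f x \<le> f y \<longleftrightarrow> x \<le> y)"

definition completion :: "('a::order \<Rightarrow> 'c::complete_lattice) \<Rightarrow> bool" where
  "completion e \<longleftrightarrow> order_embedding e"

definition FI_dense ::
  "'a::order set set \<Rightarrow> 'a set set \<Rightarrow> ('a \<Rightarrow> 'c::complete_lattice) \<Rightarrow> bool" where
  "FI_dense \<F> \<I> e \<longleftrightarrow>
     (\<forall>z. z = Sup {Inf (e ` F) | F. F \<in> \<F> \<and> Inf (e ` F) \<le> z}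
        \<and> z = Inf {Sup (e ` I) | I. I \<in> \<I> \<and> z \<le> Sup (e ` I)})"

definition FI_compact ::
  "'a::order set set \<Rightarrow> 'a set set \<Rightarrow> ('a \<Rightarrow> 'c::complete_lattice) \<Rightarrow> bool" where
  "FI_compact \<F> \<I> e \<longleftrightarrow>
     (\<forall>F\<in>\<F>. \<forall>I\<in>\<I>. Inf (e ` F) \<le> Sup (e ` I) \<longrightarrow> F \<inter> I \<noteq> {})"

definition canonical_extension ::
  "'a::order set set \<Rightarrow> 'a set set \<Rightarrow> ('a \<Rightarrow> 'c::complete_lattice) \<Rightarrow> bool" where
  "canonical_extension \<F> \<I> e \<longleftrightarrow> completion e \<and> FI_dense \<F> \<I> e \<and> FI_compact \<F> \<I> e"

definition is_glb_in :: "'b set \<Rightarrow> ('b \<Rightarrow> 'b \<Rightarrow> bool) \<Rightarrow> 'b set \<Rightarrow> 'b \<Rightarrow> bool" where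
  "is_glb_in A le X m \<longleftrightarrow> m \<in> A \<and> (\<forall>x\<in>X. le m x)
     \<and> (\<forall>b\<in>A. (\<forall>x\<in>X. le b x) \<longrightarrow> le b m)"

definition is_lub_in :: "'b set \<Rightarrow> ('b \<Rightarrow> 'b \<Rightarrow> bool) \<Rightarrow> 'b set \<Rightarrow> 'b \<Rightarrow> bool" where
  "is_lub_in A le X m \<longleftrightarrow> m \<in> A \<and> (\<forall>x\<in>X. le x m)
     \<and> (\<forall>b\<in>A. (\<forall>x\<in>X. le x b) \<longrightarrow> le m b)"

definition F_le :: "'a set \<Rightarrow> 'a set \<Rightarrow> bool" where
  "F_le F G \<longleftrightarrow> G \<subseteq> F"

definition I_le :: "'a set \<Rightarrow> 'a set \<Rightarrow> bool" where
  "I_le I J \<longleftrightarrow> I \<subseteq> J"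

definition e_F :: "'a::order \<Rightarrow> 'a set" where "e_F p = up p"
definition e_I :: "'a::order \<Rightarrow> 'a set" where "e_I p = down p"
definition pi_F :: "('a \<Rightarrow> 'c::complete_lattice) \<Rightarrow> 'a set \<Rightarrow> 'c" where
  "pi_F e F = Inf (e ` F)"
definition pi_I :: "('a \<Rightarrow> 'c::complete_lattice) \<Rightarrow> 'a set \<Rightarrow> 'c" where
  "pi_I e I = Sup (e ` I)"

end

theory Submission
  imports Defs
begin

lemma emb_mono: "order_embedding e \<Longrightarrow> x \<le> y \<Longrightarrow> e x \<le> e y"
  unfolding order_embedding_def by blast

lemma Sup_down: "order_embedding (e::'a::order \<Rightarrow> 'c::complete_lattice) \<Longrightarrow> Sup (e ` down g) = e g"
  apply (rule antisym)
   apply (rule Sup_least) apply (auto simp: down_def intro: emb_mono)[1]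
  apply (rule Sup_upper) apply (auto simp: down_def)
  done

lemma Inf_up: "order_embedding (e::'a::order \<Rightarrow> 'c::complete_lattice) \<Longrightarrow> Inf (e ` up g) = e g"
  apply (rule antisym)
   apply (rule Inf_lower) apply (auto simp: up_def)[1]
  apply (rule Inf_greatest) apply (auto simp: up_def intro: emb_mono)
  done

lemma keyF:
  assumes "standard_upsets \<F>" "standard_downsets \<I>" "canonical_extension \<F> \<I> e"
    and "F \<in> \<F>" "Inf (e ` F) \<le> e g"
  shows "g \<in> F"
proof -
  have emb: "order_embedding e" using assms(3) by (simp add: canonical_extension_def completion_def)
  have d: "down g \<in> \<I>" using assms(2) by (simp add: standard_downsets_def)
  have "Inf (e ` F) \<le> Sup (e ` down g)" using assms(5) Sup_down[OF emb] by simp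
  then have "F \<inter> down g \<noteq> {}" using assms(3,4) d
    by (simp add: canonical_extension_def FI_compact_def)
  then obtain f where "f \<in> F" "f \<le> g" by (auto simp: down_def)
  moreover have "upset F" using assms(1,4) by (simp add: standard_upsets_def)
  ultimately show ?thesis by (auto simp: upset_def)
qed

lemma keyI:
  assumes "standard_upsets \<F>" "standard_downsets \<I>" "canonical_extension \<F> \<I> e"
    and "I \<in> \<I>" "e g \<le> Sup (e ` I)"
  shows "g \<in> I"
proof -
  have emb: "order_embedding e" using assms(3) by (simp add: canonical_extension_def completion_def)
  have d: "up g \<in> \<F>" using assms(1) by (simp add: standard_upsets_def)
  have "Inf (e ` up g) \<le> Sup (e ` I)" using assms(5) Inf_up[OF emb] by simp
  then have "up g \<inter> I \<noteq> {}" using assms(3,4) d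
    by (simp add: canonical_extension_def FI_compact_def)
  then obtain f where "f \<in> I" "g \<le> f" by (auto simp: up_def)
  moreover have "downset I" using assms(2,4) by (simp add: standard_downsets_def)
  ultimately show ?thesis by (auto simp: downset_def)
qed

theorem proposition5p2:
  fixes \<F> \<I> :: "'a::order set set" and e :: "'a \<Rightarrow> 'c::complete_lattice"
  assumes "standard_upsets \<F>" and "standard_downsets \<I>"
    and "canonical_extension \<F> \<I> e"
  shows "(\<forall>F\<in>\<F>. \<forall>G\<in>\<F>. pi_F e F \<le> pi_F e G \<longleftrightarrow> F_le F G)
       \<and> (\<forall>I\<in>\<I>. \<forall>J\<in>\<I>. pi_I e I \<le> pi_I e J \<longleftrightarrow> I_le I J)
       \<and> (\<forall>S M. is_glb_in \<F> F_le (e_F ` S) M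
              \<longrightarrow> Inf ((pi_F e \<circ> e_F) ` S) = pi_F e M)
       \<and> (\<forall>T M. is_lub_in \<I> I_le (e_I ` T) M
              \<longrightarrow> Sup ((pi_I e \<circ> e_I) ` T) = pi_I e M)"
proof -
  have emb: "order_embedding e" using assms(3) by (simp add: canonical_extension_def completion_def)
  have dense: "FI_dense \<F> \<I> e" using assms(3) by (simp add: canonical_extension_def)
  have P1: "pi_F e F \<le> pi_F e G \<longleftrightarrow> F_le F G" if "F \<in> \<F>" "G \<in> \<F>" for F G
  proof
    assume h: "pi_F e F \<le> pi_F e G"
    show "F_le F G" unfolding F_le_def
    proof
      fix g assume "g \<in> G"
      then have "Inf (e ` G) \<le> e g" by (simp add: Inf_lower)
      then have "Inf (e ` F) \<le> e g" using h unfolding pi_F_def by (rule order_trans[rotated])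
      then show "g \<in> F" using keyF[OF assms that(1)] by blast
    qed
  next
    assume "F_le F G" then show "pi_F e F \<le> pi_F e G"
      unfolding F_le_def pi_F_def by (simp add: Inf_superset_mono image_mono)
  qed
  have P2: "pi_I e I \<le> pi_I e J \<longleftrightarrow> I_le I J" if "I \<in> \<I>" "J \<in> \<I>" for I J
  proof
    assume h: "pi_I e I \<le> pi_I e J"
    show "I_le I J" unfolding I_le_def
    proof
      fix g assume "g \<in> I"
      then have "e g \<le> Sup (e ` I)" by (simp add: Sup_upper)
      then have "e g \<le> Sup (e ` J)" using h unfolding pi_I_def by (rule order_trans)
      then show "g \<in> J" using keyI[OF assms that(2)] by blast
    qed
  next
    assume "I_le I J" then show "pi_I e I \<le> pi_I e J"
      unfolding I_le_def pi_I_def by (simp add: Sup_subset_mono image_mono)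
  qed
  have P3: "Inf ((pi_F e \<circ> e_F) ` S) = pi_F e M" if h: "is_glb_in \<F> F_le (e_F ` S) M" for S M
  proof -
    have eq: "(pi_F e \<circ> e_F) ` S = e ` S"
      by (auto simp: pi_F_def e_F_def Inf_up[OF emb] image_iff)
    have M: "M \<in> \<F>" and upM: "upset M" using h assms(1)
      by (auto simp: is_glb_in_def standard_upsets_def)
    have SM: "S \<subseteq> M" using h by (auto simp: is_glb_in_def F_le_def e_F_def up_def)
    have least: "M \<subseteq> B" if "B \<in> \<F>" "S \<subseteq> B" for B
    proof -
      have "upset B" using that assms(1) by (simp add: standard_upsets_def)
      then have "\<forall>x\<in>e_F ` S. F_le B x" using that(2)
        by (auto simp: F_le_def e_F_def up_def upset_def)
      then show ?thesis using h that(1) by (auto simp: is_glb_in_def F_le_def)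
    qed
    have "Inf (e ` M) \<le> Inf (e ` S)" using SM by (simp add: Inf_superset_mono image_mono)
    moreover have "Inf (e ` S) \<le> Inf (e ` M)"
    proof -
      let ?z = "Inf (e ` S)"
      have "?z = Sup {Inf (e ` F) | F. F \<in> \<F> \<and> Inf (e ` F) \<le> ?z}"
        using dense unfolding FI_dense_def by blast
      also have "\<dots> \<le> Inf (e ` M)"
      proof (rule Sup_least, clarify)
        fix F assume F: "F \<in> \<F>" "Inf (e ` F) \<le> ?z"
        have "S \<subseteq> F"
        proof
          fix p assume "p \<in> S"
          then have "?z \<le> e p" by (simp add: Inf_lower)
          then show "p \<in> F" using F keyF[OF assms F(1)] order_trans by blast
        qed
        then have "M \<subseteq> F" using least F(1) by blast
        then show "Inf (e ` F) \<le> Inf (e ` M)" by (simp add: Inf_superset_mono image_mono)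
      qed
      finally show ?thesis .
    qed
    ultimately show ?thesis using eq by (simp add: pi_F_def)
  qed
  have P4: "Sup ((pi_I e \<circ> e_I) ` T) = pi_I e M" if h: "is_lub_in \<I> I_le (e_I ` T) M" for T M
  proof -
    have eq: "(pi_I e \<circ> e_I) ` T = e ` T"
      by (auto simp: pi_I_def e_I_def Sup_down[OF emb] image_iff)
    have TM: "T \<subseteq> M" using h by (auto simp: is_lub_in_def I_le_def e_I_def down_def)
    have least: "M \<subseteq> B" if "B \<in> \<I>" "T \<subseteq> B" for B
    proof -
      have "downset B" using that assms(2) by (simp add: standard_downsets_def)
      then have "\<forall>x\<in>e_I ` T. I_le x B" using that(2)
        by (auto simp: I_le_def e_I_def down_def downset_def)
      then show ?thesis using h that(1) by (auto simp: is_lub_in_def I_le_def)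
    qed
    have "Sup (e ` T) \<le> Sup (e ` M)" using TM by (simp add: Sup_subset_mono image_mono)
    moreover have "Sup (e ` M) \<le> Sup (e ` T)"
    proof -
      let ?z = "Sup (e ` T)"
      have "Sup (e ` M) \<le> Inf {Sup (e ` I) | I. I \<in> \<I> \<and> ?z \<le> Sup (e ` I)}"
      proof (rule Inf_greatest, clarify)
        fix I assume I: "I \<in> \<I>" "?z \<le> Sup (e ` I)"
        have "T \<subseteq> I"
        proof
          fix p assume "p \<in> T"
          then have "e p \<le> ?z" by (simp add: Sup_upper)
          then show "p \<in> I" using I keyI[OF assms I(1)] order_trans by blast
        qed
        then have "M \<subseteq> I" using least I(1) by blast
        then show "Sup (e ` M) \<le> Sup (e ` I)" by (simp add: Sup_subset_mono image_mono)
      qed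
      also have "\<dots> = ?z"
        using dense unfolding FI_dense_def by metis
      finally show ?thesis .
    qed
    ultimately show ?thesis using eq by (simp add: pi_I_def)
  qed
  show ?thesis using P1 P2 P3 P4 by blast
qed

end
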